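(* Let $n$ be a positive integer and let $G$ be a subgroup of $U(n)$. Then for every $\vec v \in S(n)$, $\lambda(G)$ divides $\#\mathrm{Orb}(G;\vec v)$.
   Context: $U(n)$ is the group (under matrix multiplication) of $2\times 2$ matrices $\begin{bmatrix} a & b \\ 0 & 1\end{bmatrix}$ with $a \in (\mathbb{Z}/n\mathbb{Z})^\times$ and $b \in \mathbb{Z}/n\mathbb{Z}$. $S(n)$ is the set of column vectors $\begin{bmatrix} j \\ 1\end{bmatrix}$ with $j \in \mathbb{Z}/n\mathbb{Z}$, on which $U(n)$ acts by matrix–vector multiplication: $\begin{bmatrix} a & b \\ 0 & 1\end{bmatrix}\begin{bmatrix} j \\ 1\end{bmatrix} = \begin{bmatrix} aj+b \\ 1\end{bmatrix}$. $\mathrm{Orb}(G;\vec v)$ is the orbit of $\vec v$ under $G$, and $\#X$ is the cardinality of $X$. $\lambda(G)$ is the minimum of $\#\mathrm{Orb}(G;\vec v)$ over $\vec v \in S(n)$. *)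

theory Defs
  imports "HOL-Algebra.Group"
begin

text \<open>The matrix [[a, b],[0, 1]] over Z/nZ is represented by the pair (a, b) of
canonical residues a, b in {0..<n}; a must be a unit mod n.\<close>

definition U :: "nat \<Rightarrow> (nat \<times> nat) monoid" where
  "U n = \<lparr> carrier = {(a, b). a < n \<and> b < n \<and> coprime a n},
           mult = (\<lambda>(a, b) (c, d). ((a * c) mod n, (a * d + b) mod n)),
           one = (1 mod n, 0) \<rparr>"

text \<open>The vector [j, 1] in S(n) is represented by j in {0..<n}; action by matrix-vector product.\<close>

definition S :: "nat \<Rightarrow> nat set" where
  "S n = {..<n}"

definition act :: "nat \<Rightarrow> nat \<times> nat \<Rightarrow> nat \<Rightarrow> nat" where
  "act n g j = (fst g * j + snd g) mod n"

definition Orb :: "nat \<Rightarrow> (nat \<times> nat) set \<Rightarrow> nat \<Rightarrow> nat set" where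
  "Orb n G v = (\<lambda>g. act n g v) ` G"

definition lam :: "nat \<Rightarrow> (nat \<times> nat) set \<Rightarrow> nat" where
  "lam n G = Min ((\<lambda>v. card (Orb n G v)) ` S n)"

end

theory Submission imports Defs "HOL-Algebra.Sylow" "HOL-Algebra.Group_Action" "HOL-Computational_Algebra.Primes" "HOL-Number_Theory.Cong" begin


lemma U_carrier: "carrier (U d) = {(a, b). a < d \<and> b < d \<and> coprime a d}"
  by (simp add: U_def)

lemma U_mult: "x \<otimes>\<^bsub>U d\<^esub> y = ((fst x * fst y) mod d, (fst x * snd y + snd x) mod d)"
  by (simp add: U_def case_prod_beta)

lemma U_one: "\<one>\<^bsub>U d\<^esub> = (1 mod d, 0)"
  by (simp add: U_def)

lemma U_group:
  assumes d: "0 < d" shows "group (U d)"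
proof (rule groupI)
  fix x y assume x: "x \<in> carrier (U d)" and y: "y \<in> carrier (U d)"
  show "x \<otimes>\<^bsub>U d\<^esub> y \<in> carrier (U d)"
    using x y d by (auto simp: U_carrier U_mult)
next
  show "\<one>\<^bsub>U d\<^esub> \<in> carrier (U d)" using d
    by (auto simp: U_carrier U_one)
next
  fix x y z assume "x \<in> carrier (U d)" "y \<in> carrier (U d)" "z \<in> carrier (U d)"
  show "x \<otimes>\<^bsub>U d\<^esub> y \<otimes>\<^bsub>U d\<^esub> z = x \<otimes>\<^bsub>U d\<^esub> (y \<otimes>\<^bsub>U d\<^esub> z)"
  proof -
    obtain a b c e f g where xyz: "x = (a,b)" "y = (c,e)" "z = (f,g)" by (cases x, cases y, cases z) auto
    have 1: "(a * c mod d * f) mod d = (a * (c * f mod d)) mod d"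
      by (metis mod_mult_left_eq mod_mult_right_eq mult.assoc)
    have "(a * c mod d * g + (a * e + b) mod d) mod d = (a * c * g + (a * e + b)) mod d"
      by (rule mod_add_cong) (simp_all add: mod_mult_left_eq)
    also have "\<dots> = (a * (c * g + e) + b) mod d" by (simp add: algebra_simps)
    also have "\<dots> = (a * ((c * g + e) mod d) + b) mod d"
      by (rule mod_add_cong) (simp_all add: mod_mult_right_eq)
    finally show ?thesis using 1 by (simp add: xyz U_mult)
  qed
next
  fix x assume x: "x \<in> carrier (U d)"
  show "\<one>\<^bsub>U d\<^esub> \<otimes>\<^bsub>U d\<^esub> x = x"
    using x by (auto simp: U_carrier U_mult U_one mod_simps)
next
  fix x assume x: "x \<in> carrier (U d)"
  obtain a b where ab: "x = (a, b)" "a < d" "b < d" "coprime a d"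
    using x by (auto simp: U_carrier)
  obtain c where c: "[a * c = Suc 0] (mod d)"
    using cong_solve_coprime_nat[OF ab(4)] by blast
  define c' where "c' = c mod d"
  have c'1: "(c' * a) mod d = 1 mod d"
    using c unfolding c'_def cong_def by (simp add: mod_simps mult.commute)
  have cop: "coprime c' d"
  proof -
    have "coprime (c' * a) d" using c'1
      by (metis coprime_1_left coprime_mod_left_iff d mod_by_0 mod_mod_trivial nat_neq_iff coprime_commute)
    then show ?thesis by simp
  qed
  define y where "y = (c', (d - (c' * b) mod d) mod d)"
  have "y \<in> carrier (U d)" using d cop by (simp add: y_def U_carrier c'_def)
  moreover have "y \<otimes>\<^bsub>U d\<^esub> x = \<one>\<^bsub>U d\<^esub>"
  proof -
    have "(c' * b + (d - c' * b mod d) mod d) mod d = 0"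
    proof -
      have "(c' * b + (d - c' * b mod d) mod d) mod d = (c' * b mod d + (d - c' * b mod d)) mod d"
        by (simp add: mod_simps)
      also have "c' * b mod d + (d - c' * b mod d) = d" using d by simp
      finally show ?thesis by simp
    qed
    then show ?thesis using c'1 by (simp add: y_def ab U_mult U_one)
  qed
  ultimately show "\<exists>y\<in>carrier (U d). y \<otimes>\<^bsub>U d\<^esub> x = \<one>\<^bsub>U d\<^esub>" by blast
qed


lemma act_mult: "act d (g \<otimes>\<^bsub>U d\<^esub> h) x = act d g (act d h x)"
proof -
  obtain a b c e where gh: "g = (a,b)" "h = (c,e)" by (cases g, cases h) auto
  have "(a * c mod d * x + (a * e + b) mod d) mod d = (a * c * x + (a * e + b)) mod d"
    by (rule mod_add_cong) (simp_all add: mod_mult_left_eq)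
  also have "\<dots> = (a * (c * x + e) + b) mod d" by (simp add: algebra_simps)
  also have "\<dots> = (a * ((c * x + e) mod d) + b) mod d"
    by (rule mod_add_cong) (simp_all add: mod_mult_right_eq)
  finally show ?thesis by (simp add: gh act_def U_mult)
qed

lemma act_one: "x < d \<Longrightarrow> act d \<one>\<^bsub>U d\<^esub> x = x"
  by (simp add: act_def U_one mod_simps)

lemma act_lt: "0 < d \<Longrightarrow> act d g x < d"
  by (simp add: act_def)

definition Stab :: "nat \<Rightarrow> (nat \<times> nat) set \<Rightarrow> nat \<Rightarrow> (nat \<times> nat) set" where
  "Stab d F x = {g \<in> F. act d g x = x}"

lemma sub_group_action:
  assumes d: "0 < d" and F: "subgroup F (U d)"
  shows "group_action ((U d)\<lparr>carrier := F\<rparr>) {..<d} (\<lambda>g. \<lambda>x\<in>{..<d}. act d g x)"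
proof -
  interpret Ud: group "U d" using U_group[OF d] .
  have grp: "group ((U d)\<lparr>carrier := F\<rparr>)" using Ud.subgroup_imp_group[OF F] .
  have bij: "(\<lambda>x\<in>{..<d}. act d g x) \<in> Bij {..<d}" if g: "g \<in> F" for g
  proof -
    have gc: "g \<in> carrier (U d)" using g F subgroup.subset by blast
    have ic: "inv\<^bsub>U d\<^esub> g \<in> carrier (U d)" using gc by simp
    have inj: "inj_on (act d g) {..<d}"
    proof (rule inj_onI)
      fix x y assume x: "x \<in> {..<d}" and y: "y \<in> {..<d}" and e: "act d g x = act d g y"
      have "x = act d (inv\<^bsub>U d\<^esub> g \<otimes>\<^bsub>U d\<^esub> g) x" using x gc by (simp add: act_one)
      also have "\<dots> = act d (inv\<^bsub>U d\<^esub> g) (act d g y)" by (simp add: act_mult e)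
      also have "\<dots> = act d (inv\<^bsub>U d\<^esub> g \<otimes>\<^bsub>U d\<^esub> g) y" by (simp add: act_mult)
      also have "\<dots> = y" using y gc by (simp add: act_one)
      finally show "x = y" .
    qed
    have "act d g ` {..<d} = {..<d}"
      by (rule endo_inj_surj) (use inj d in \<open>auto simp: act_def\<close>)
    then have "bij_betw (act d g) {..<d} {..<d}" using inj by (simp add: bij_betw_def)
    then show ?thesis unfolding Bij_def by (simp add: bij_betw_def inj_on_def)
  qed
  show ?thesis
    unfolding group_action_def
  proof (rule group_hom.intro[OF grp group_BijGroup], unfold group_hom_axioms_def hom_def, safe)
    fix g assume "g \<in> carrier ((U d)\<lparr>carrier := F\<rparr>)"
    then show "(\<lambda>x\<in>{..<d}. act d g x) \<in> carrier (BijGroup {..<d})"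
      using bij by (simp add: BijGroup_def)
  next
    fix g h assume g: "g \<in> carrier ((U d)\<lparr>carrier := F\<rparr>)" and h: "h \<in> carrier ((U d)\<lparr>carrier := F\<rparr>)"
    have "(\<lambda>x\<in>{..<d}. act d (g \<otimes>\<^bsub>U d\<^esub> h) x) =
          compose {..<d} (\<lambda>x\<in>{..<d}. act d g x) (\<lambda>x\<in>{..<d}. act d h x)"
      using d by (auto simp: compose_def act_mult act_lt)
    then show "(\<lambda>x\<in>{..<d}. act d (g \<otimes>\<^bsub>(U d)\<lparr>carrier := F\<rparr>\<^esub> h) x) =
       (\<lambda>x\<in>{..<d}. act d g x) \<otimes>\<^bsub>BijGroup {..<d}\<^esub> (\<lambda>x\<in>{..<d}. act d h x)"
      using bij g h by (simp add: BijGroup_def)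
  qed
qed

lemma orbit_stab:
  assumes d: "0 < d" and F: "subgroup F (U d)" and x: "x < d"
  shows "card (Orb d F x) * card (Stab d F x) = card F"
proof -
  interpret A: group_action "(U d)\<lparr>carrier := F\<rparr>" "{..<d}" "\<lambda>g. \<lambda>x\<in>{..<d}. act d g x"
    using sub_group_action[OF d F] .
  have "card (orbit ((U d)\<lparr>carrier := F\<rparr>) (\<lambda>g. \<lambda>x\<in>{..<d}. act d g x) x) *
        card (stabilizer ((U d)\<lparr>carrier := F\<rparr>) (\<lambda>g. \<lambda>x\<in>{..<d}. act d g x) x) = order ((U d)\<lparr>carrier := F\<rparr>)"
    using A.orbit_stabilizer_theorem x by simp
  moreover have "orbit ((U d)\<lparr>carrier := F\<rparr>) (\<lambda>g. \<lambda>x\<in>{..<d}. act d g x) x = Orb d F x"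
    using x by (auto simp: orbit_def Orb_def)
  moreover have "stabilizer ((U d)\<lparr>carrier := F\<rparr>) (\<lambda>g. \<lambda>x\<in>{..<d}. act d g x) x = Stab d F x"
    using x by (auto simp: stabilizer_def Stab_def)
  ultimately show ?thesis by (simp add: order_def)
qed

lemma Stab_subgroup:
  assumes d: "0 < d" and F: "subgroup F (U d)" and x: "x < d"
  shows "subgroup (Stab d F x) ((U d)\<lparr>carrier := F\<rparr>)"
proof -
  interpret A: group_action "(U d)\<lparr>carrier := F\<rparr>" "{..<d}" "\<lambda>g. \<lambda>x\<in>{..<d}. act d g x"
    using sub_group_action[OF d F] .
  have "stabilizer ((U d)\<lparr>carrier := F\<rparr>) (\<lambda>g. \<lambda>x\<in>{..<d}. act d g x) x = Stab d F x"
    using x by (auto simp: stabilizer_def Stab_def)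
  moreover have "subgroup (stabilizer ((U d)\<lparr>carrier := F\<rparr>) (\<lambda>g. \<lambda>x\<in>{..<d}. act d g x) x) ((U d)\<lparr>carrier := F\<rparr>)"
    using A.stabilizer_subgroup x by simp
  ultimately show ?thesis by simp
qed


lemma sum_reindex_grp:
  assumes "group H" "t \<in> carrier H"
  shows "(\<Sum>s\<in>carrier H. f (t \<otimes>\<^bsub>H\<^esub> s)) = (\<Sum>s\<in>carrier H. (f s :: int))"
proof -
  have "(\<Sum>s\<in>carrier H. f (t \<otimes>\<^bsub>H\<^esub> s)) = sum f ((\<otimes>\<^bsub>H\<^esub>) t ` carrier H)"
    using sum.reindex[OF group.inj_on_cmult[OF assms], of f] by (simp add: comp_def)
  also have "\<dots> = sum f (carrier H)" using group.surj_const_mult[OF assms] by simp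
  finally show ?thesis .
qed

lemma int_act: "int (act d g x) = (int (fst g) * int x + int (snd g)) mod int d"
  by (simp add: act_def of_nat_mod)

lemma key_fix:
  assumes d: "0 < d" and F: "subgroup F (U d)"
    and comm: "\<And>g h. g \<in> F \<Longrightarrow> h \<in> F \<Longrightarrow> g \<otimes>\<^bsub>U d\<^esub> h = h \<otimes>\<^bsub>U d\<^esub> g"
    and P: "subgroup P ((U d)\<lparr>carrier := F\<rparr>)" and R: "subgroup R ((U d)\<lparr>carrier := F\<rparr>)"
    and cop: "coprime (card P) (card R)"
    and z0: "z0 < d" "\<And>s. s \<in> P \<Longrightarrow> act d s z0 = z0"
    and x0: "x0 < d" "\<And>r. r \<in> R \<Longrightarrow> act d r x0 = x0"
  shows "\<exists>y<d. (\<forall>s\<in>P. act d s y = y) \<and> (\<forall>r\<in>R. act d r y = y)"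
proof -
  interpret Ud: group "U d" using U_group[OF d] .
  have Fg: "group ((U d)\<lparr>carrier := F\<rparr>)" using Ud.subgroup_imp_group[OF F] .
  have Sg: "group ((U d)\<lparr>carrier := P\<rparr>)"
    using group.subgroup_imp_group[OF Fg P] by simp
  have Rg: "group ((U d)\<lparr>carrier := R\<rparr>)"
    using group.subgroup_imp_group[OF Fg R] by simp
  have SF: "P \<subseteq> F" using P subgroup.subset by force
  have RF: "R \<subseteq> F" using R subgroup.subset by force
  have "gcd (int (card P)) (int (card R)) = 1" using cop by (simp add: gcd_int_def)
  then obtain \<alpha> \<beta> :: int where ab: "\<alpha> * int (card P) + \<beta> * int (card R) = 1"
    using bezout_int by metis
  define A where "A = (\<lambda>s. int (act d s x0))"
  define B where "B = (\<lambda>r. int (act d r z0))"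
  define Y where "Y = \<alpha> * (\<Sum>s\<in>P. A s) + \<beta> * (\<Sum>r\<in>R. B r)"
  define y where "y = nat (Y mod int d)"
  have yd: "y < d" using d by (simp add: y_def nat_less_iff)
  have iy: "int y = Y mod int d" using d by (simp add: y_def)
  have gen: "int (act d t y) = (\<alpha> * (\<Sum>s\<in>P. int (act d (t \<otimes>\<^bsub>U d\<^esub> s) x0)) +
                \<beta> * (\<Sum>r\<in>R. int (act d t (act d r z0)))) mod int d" for t
  proof -
    define a where "a = int (fst t)"
    define b where "b = int (snd t)"
    have "int (act d t y) = (a * (Y mod int d) + b) mod int d"
      unfolding int_act iy a_def b_def by simp
    also have "\<dots> = (a * Y + b) mod int d"
      by (rule mod_add_cong) (simp_all add: mod_mult_right_eq)
    also have "a * Y + b = \<alpha> * (\<Sum>s\<in>P. a * A s + b) + \<beta> * (\<Sum>r\<in>R. a * B r + b)"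
    proof -
      have "a * Y + b = a * Y + b * (\<alpha> * int (card P) + \<beta> * int (card R))" using ab by simp
      also have "\<dots> = \<alpha> * (\<Sum>s\<in>P. a * A s + b) + \<beta> * (\<Sum>r\<in>R. a * B r + b)"
        by (simp add: Y_def sum.distrib sum_distrib_left algebra_simps)
      finally show ?thesis .
    qed
    also have "(\<alpha> * (\<Sum>s\<in>P. a * A s + b) + \<beta> * (\<Sum>r\<in>R. a * B r + b)) mod int d =
       (\<alpha> * (\<Sum>s\<in>P. int (act d (t \<otimes>\<^bsub>U d\<^esub> s) x0)) +
                \<beta> * (\<Sum>r\<in>R. int (act d t (act d r z0)))) mod int d"
    proof -
      have "[(\<Sum>s\<in>P. a * A s + b) = (\<Sum>s\<in>P. int (act d (t \<otimes>\<^bsub>U d\<^esub> s) x0))] (mod int d)"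
        by (rule cong_sum) (simp add: act_mult int_act A_def a_def b_def cong_def)
      moreover have "[(\<Sum>r\<in>R. a * B r + b) = (\<Sum>r\<in>R. int (act d t (act d r z0)))] (mod int d)"
        by (rule cong_sum) (simp add: int_act[of d t] B_def a_def b_def cong_def)
      ultimately show ?thesis
        unfolding cong_def[symmetric] by (intro cong_add cong_scalar_left)
    qed
    finally show ?thesis .
  qed
  have fixY: "int (act d t y) = int y" if "(\<Sum>s\<in>P. int (act d (t \<otimes>\<^bsub>U d\<^esub> s) x0)) = (\<Sum>s\<in>P. A s)"
     "(\<Sum>r\<in>R. int (act d t (act d r z0))) = (\<Sum>r\<in>R. B r)" for t
    using gen[of t] that by (simp add: iy Y_def)
  have "\<forall>s\<in>P. act d s y = y"
  proof
    fix t assume t: "t \<in> P"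
    have 1: "(\<Sum>s\<in>P. int (act d (t \<otimes>\<^bsub>U d\<^esub> s) x0)) = (\<Sum>s\<in>P. A s)"
      using sum_reindex_grp[OF Sg, of t "\<lambda>s. int (act d s x0)"] t by (simp add: A_def)
    have 2: "(\<Sum>r\<in>R. int (act d t (act d r z0))) = (\<Sum>r\<in>R. B r)"
    proof (rule sum.cong)
      fix r assume r: "r \<in> R"
      have "act d t (act d r z0) = act d (t \<otimes>\<^bsub>U d\<^esub> r) z0" by (simp add: act_mult)
      also have "\<dots> = act d (r \<otimes>\<^bsub>U d\<^esub> t) z0" using comm[of t r] t r SF RF by (metis subsetD)
      also have "\<dots> = act d r z0" using z0 t by (simp add: act_mult)
      finally show "int (act d t (act d r z0)) = B r" by (simp add: B_def)
    qed simp
    show "act d t y = y" using fixY[OF 1 2] by simp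
  qed
  moreover have "\<forall>r\<in>R. act d r y = y"
  proof
    fix t assume t: "t \<in> R"
    have 1: "(\<Sum>s\<in>P. int (act d (t \<otimes>\<^bsub>U d\<^esub> s) x0)) = (\<Sum>s\<in>P. A s)"
    proof (rule sum.cong)
      fix s assume s: "s \<in> P"
      have "act d (t \<otimes>\<^bsub>U d\<^esub> s) x0 = act d (s \<otimes>\<^bsub>U d\<^esub> t) x0" using comm[of t s] t s SF RF by (metis subsetD)
      also have "\<dots> = act d s x0" using x0 t by (simp add: act_mult)
      finally show "int (act d (t \<otimes>\<^bsub>U d\<^esub> s) x0) = A s" by (simp add: A_def)
    qed simp
    have 2: "(\<Sum>r\<in>R. int (act d t (act d r z0))) = (\<Sum>r\<in>R. B r)"
      using sum_reindex_grp[OF Rg, of t "\<lambda>r. int (act d r z0)"] t by (simp add: B_def act_mult)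
    show "act d t y = y" using fixY[OF 1 2] by simp
  qed
  ultimately show ?thesis using yd by blast
qed


lemma finite_U: "finite (carrier (U d))"
proof -
  have "carrier (U d) \<subseteq> {..<d} \<times> {..<d}" by (auto simp: U_carrier)
  then show ?thesis by (rule finite_subset) simp
qed

lemma card_sub_dvd:
  assumes "group G" "subgroup H G" "subgroup K G" "H \<subseteq> K"
  shows "card H dvd card K"
proof -
  have g: "group (G\<lparr>carrier := K\<rparr>)" using group.subgroup_imp_group[OF assms(1,3)] .
  have "subgroup H (G\<lparr>carrier := K\<rparr>)" using group.subgroup_incl[OF assms] .
  then have "card (rcosets\<^bsub>G\<lparr>carrier := K\<rparr>\<^esub> H) * card H = order (G\<lparr>carrier := K\<rparr>)"
    using group.lagrange[OF g] by blast
  then show ?thesis by (metis dvd_triv_right order_def partial_object.select_convs(1) partial_object.surjective partial_object.update_convs(1))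
qed



lemma core:
  assumes d: "0 < d" and F: "subgroup F (U d)"
    and comm: "\<And>g h. g \<in> F \<Longrightarrow> h \<in> F \<Longrightarrow> g \<otimes>\<^bsub>U d\<^esub> h = h \<otimes>\<^bsub>U d\<^esub> g"
  shows "\<exists>w<d. \<forall>v<d. card (Stab d F v) dvd card (Stab d F w)"
proof -
  interpret Ud: group "U d" using U_group[OF d] .
  define Fg where "Fg = (U d)\<lparr>carrier := F\<rparr>"
  have Fgg: "group Fg" unfolding Fg_def using Ud.subgroup_imp_group[OF F] .
  have Fcg: "comm_group Fg"
    using group.group_comm_groupI[OF Fgg] comm by (simp add: Fg_def)
  have finF: "finite F" using F subgroup.subset finite_U finite_subset by blast
  have StF: "Stab d F x \<subseteq> F" for x by (auto simp: Stab_def)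
  have Stsub: "subgroup (Stab d F x) Fg" if "x < d" for x
    using Stab_subgroup[OF d F that] by (simp add: Fg_def)
  define good where "good p k \<longleftrightarrow> (\<exists>P x. x < d \<and> subgroup P Fg \<and> card P = p ^ k \<and> P \<subseteq> Stab d F x)" for p k
  define K where "K p = Max {k. good p k}" for p
  have one_good: "good p 0" for p
  proof -
    have "subgroup {\<one>\<^bsub>Fg\<^esub>} Fg" using group.triv_subgroup[OF Fgg] .
    moreover have "{\<one>\<^bsub>Fg\<^esub>} \<subseteq> Stab d F 0"
      using d F subgroup.one_closed by (fastforce simp: Stab_def Fg_def act_one)
    ultimately show ?thesis unfolding good_def using d by force
  qed
  have good_bound: "k < card F" if gd: "good p k" and pp: "prime p" for p k
  proof -
    obtain P x where Px: "x < d" "subgroup P Fg" "card P = p ^ k" "P \<subseteq> Stab d F x"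
      using gd unfolding good_def by blast
    have "P \<subseteq> F" using Px(4) StF by blast
    then have "card P \<le> card F" using finF card_mono by blast
    moreover have "k < p ^ k"
    proof -
      have "(2::nat) ^ k \<le> p ^ k" using prime_ge_2_nat[OF pp] by (simp add: power_mono)
      then show ?thesis using less_exp[of k] by linarith
    qed
    ultimately show ?thesis using Px(3) by linarith
  qed
  have finK: "finite {k. good p k}" if "prime p" for p
  proof (rule finite_subset[of _ "{..<card F}"])
    show "{k. good p k} \<subseteq> {..<card F}" using good_bound that by blast
  qed simp
  have K_good: "good p (K p)" if "prime p" for p
    unfolding K_def using Max_in[OF finK[OF that]] one_good by blast
  have K_max: "k \<le> K p" if "prime p" "good p k" for p k
    unfolding K_def using Max_ge[OF finK[OF that(1)]] that(2) by blast
  have claim: "\<exists>R y. y < d \<and> subgroup R Fg \<and> R \<subseteq> Stab d F y \<and> card R = (\<Prod>p\<in>Q. p ^ K p)"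
    if "finite Q" "\<And>p. p \<in> Q \<Longrightarrow> prime p" for Q
    using that
  proof (induction Q rule: finite_induct)
    case empty
    have "subgroup {\<one>\<^bsub>Fg\<^esub>} Fg" using group.triv_subgroup[OF Fgg] .
    moreover have "{\<one>\<^bsub>Fg\<^esub>} \<subseteq> Stab d F 0"
      using d F subgroup.one_closed by (fastforce simp: Stab_def Fg_def act_one)
    ultimately show ?case using d by force
  next
    case (insert q Q)
    obtain R y where Ry: "y < d" "subgroup R Fg" "R \<subseteq> Stab d F y" "card R = (\<Prod>p\<in>Q. p ^ K p)"
      using insert by auto
    have q: "prime q" using insert by auto
    obtain P z where Pz: "z < d" "subgroup P Fg" "card P = q ^ K q" "P \<subseteq> Stab d F z"
      using K_good[OF q] unfolding good_def by blast
    have cop: "coprime (card P) (card R)"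
      unfolding Pz(3) Ry(4)
    proof (rule prod_coprime_right)
      fix p assume p: "p \<in> Q"
      have "prime p" using insert p by auto
      moreover have "p \<noteq> q" using p insert by auto
      ultimately have "coprime q p" using q primes_coprime by blast
      then show "coprime (q ^ K q) (p ^ K p)" by simp
    qed
    have PsF: "subgroup P ((U d)\<lparr>carrier := F\<rparr>)" "subgroup R ((U d)\<lparr>carrier := F\<rparr>)"
      using Pz(2) Ry(2) by (simp_all add: Fg_def)
    obtain y' where y': "y' < d" "\<forall>s\<in>P. act d s y' = y'" "\<forall>r\<in>R. act d r y' = y'"
      using key_fix[OF d F comm PsF cop Pz(1) _ Ry(1)] Pz(4) Ry(3) by (auto simp: Stab_def)
    define R' where "R' = P <#>\<^bsub>Fg\<^esub> R"
    have R'sub: "subgroup R' Fg" unfolding R'_def using comm_group.mult_subgroups[OF Fcg Pz(2) Ry(2)] .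
    have PF: "P \<subseteq> F" using Pz(4) StF by blast
    have RF: "R \<subseteq> F" using Ry(3) StF by blast
    have R'eq: "R' = (\<lambda>(a, b). a \<otimes>\<^bsub>U d\<^esub> b) ` (P \<times> R)"
      by (auto simp: R'_def set_mult_def Fg_def)
    have R'St: "R' \<subseteq> Stab d F y'"
    proof
      fix g assume "g \<in> R'"
      then obtain a b where ab: "a \<in> P" "b \<in> R" "g = a \<otimes>\<^bsub>U d\<^esub> b" using R'eq by auto
      have "g \<in> F" using R'sub \<open>g \<in> R'\<close> subgroup.subset by (force simp: Fg_def)
      then show "g \<in> Stab d F y'" using ab y' by (simp add: Stab_def act_mult)
    qed
    have "card R' \<le> card P * card R"
    proof -
      have "card R' \<le> card (P \<times> R)" unfolding R'eq by (rule card_image_le) (use PF RF finF finite_subset in blast)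
      then show ?thesis by (simp add: card_cartesian_product)
    qed
    moreover have "card P * card R dvd card R'"
    proof (rule divides_mult[OF _ _ cop])
      have "P \<subseteq> R'"
      proof
        fix a assume a: "a \<in> P"
        have "\<one>\<^bsub>Fg\<^esub> \<in> R" using Ry(2) subgroup.one_closed by blast
        moreover have "a \<otimes>\<^bsub>Fg\<^esub> \<one>\<^bsub>Fg\<^esub> = a" using a Pz(2) Fgg group.is_monoid monoid.r_one subgroup.mem_carrier by metis
        ultimately show "a \<in> R'" unfolding R'_def set_mult_def using a by force
      qed
      then show "card P dvd card R'" using card_sub_dvd[OF Fgg Pz(2) R'sub] by blast
      have "R \<subseteq> R'"
      proof
        fix b assume b: "b \<in> R"
        have "\<one>\<^bsub>Fg\<^esub> \<in> P" using Pz(2) subgroup.one_closed by blast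
        moreover have "\<one>\<^bsub>Fg\<^esub> \<otimes>\<^bsub>Fg\<^esub> b = b" using b Ry(2) Fgg group.is_monoid monoid.l_one subgroup.mem_carrier by metis
        ultimately show "b \<in> R'" unfolding R'_def set_mult_def using b by force
      qed
      then show "card R dvd card R'" using card_sub_dvd[OF Fgg Ry(2) R'sub] by blast
    qed
    moreover have "card R' > 0"
    proof -
      have "R' \<subseteq> F" using R'St StF by blast
      then have "finite R'" using finF finite_subset by blast
      moreover have "R' \<noteq> {}" using R'sub subgroup.one_closed by blast
      ultimately show ?thesis by auto
    qed
    ultimately have "card R' = card P * card R" using dvd_imp_le by (meson antisym)
    then have "card R' = (\<Prod>p\<in>insert q Q. p ^ K p)"
      using insert Pz(3) Ry(4) by simp
    then show ?case using y'(1) R'sub R'St by blast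
  qed
  define Q where "Q = {p. prime p \<and> p dvd card F}"
  have finQ: "finite Q"
  proof -
    have "\<one>\<^bsub>U d\<^esub> \<in> F" using F subgroup.one_closed by blast
    then have "card F > 0" using finF card_gt_0_iff by blast
    then have "Q \<subseteq> {..card F}" unfolding Q_def using dvd_imp_le by auto
    then show ?thesis using finite_subset by blast
  qed
  obtain R w where Rw: "w < d" "subgroup R Fg" "R \<subseteq> Stab d F w" "card R = (\<Prod>p\<in>Q. p ^ K p)"
    using claim[OF finQ] by (auto simp: Q_def)
  have "card (Stab d F v) dvd card (Stab d F w)" if v: "v < d" for v
  proof -
    have finSt: "finite (Stab d F x)" for x using StF finF finite_subset by blast
    have Stne: "card (Stab d F x) \<noteq> 0" if "x < d" for x
    proof -
      have "\<one>\<^bsub>Fg\<^esub> \<in> Stab d F x" using Stsub[OF that] subgroup.one_closed by blast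
      then show ?thesis using finSt[of x] card_0_eq by blast
    qed
    have "card (Stab d F v) dvd (\<Prod>p\<in>Q. p ^ K p)"
    proof (rule multiplicity_le_imp_dvd[OF Stne[OF v]])
      fix p :: nat assume p: "prime p"
      define j where "j = multiplicity p (card (Stab d F v))"
      have pj: "p ^ j dvd card (Stab d F v)" unfolding j_def by (rule multiplicity_dvd)
      then obtain m where m: "card (Stab d F v) = p ^ j * m" by blast
      have Stg: "group (Fg\<lparr>carrier := Stab d F v\<rparr>)" using group.subgroup_imp_group[OF Fgg Stsub[OF v]] .
      obtain H where H: "subgroup H (Fg\<lparr>carrier := Stab d F v\<rparr>)" "card H = p ^ j"
        using sylow_thm[OF p Stg, of j m] m finSt by (auto simp: order_def)
      have HF: "subgroup H Fg" using group.incl_subgroup[OF Fgg Stsub[OF v] H(1)] .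
      have "H \<subseteq> Stab d F v" using H(1) subgroup.subset by force
      then have "good p j" unfolding good_def using v HF H(2) by blast
      then have jK: "j \<le> K p" using K_max[OF p] by blast
      show "multiplicity p (card (Stab d F v)) \<le> multiplicity p (\<Prod>p\<in>Q. p ^ K p)"
      proof (cases "p \<in> Q")
        case True
        then show ?thesis using multiplicity_prod_prime_powers[OF finQ _ p, of K] jK j_def
          by (simp add: Q_def)
      next
        case False
        have "card (Stab d F v) dvd card F"
          using card_sub_dvd[OF Ud.is_group Stab_subgroup[OF d F v, THEN group.incl_subgroup[OF Ud.is_group F]] F] StF
          by blast
        then have "\<not> p dvd card (Stab d F v)" using False p Q_def dvd_trans by blast
        then have "j = 0" unfolding j_def by (simp add: not_dvd_imp_multiplicity_0)
        then show ?thesis by (simp add: j_def)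
      qed
    qed
    also have "\<dots> dvd card (Stab d F w)"
      using card_sub_dvd[OF Fgg Rw(2) Stsub[OF Rw(1)] Rw(3)] Rw(4) by simp
    finally show ?thesis .
  qed
  then show ?thesis using Rw(1) by blast
qed



lemma trans_mult:
  assumes n: "0 < n" and G: "subgroup G (U n)" and t: "t < n" "(1 mod n, t) \<in> G"
  shows "((k * t) mod n) < n \<and> (1 mod n, (k * t) mod n) \<in> G"
proof (induction k)
  case 0
  have "(1 mod n, 0) \<in> G" using G subgroup.one_closed by (fastforce simp: U_one)
  then show ?case using n by simp
next
  case (Suc k)
  have m: "(1 mod n, t) \<otimes>\<^bsub>U n\<^esub> (1 mod n, (k * t) mod n) \<in> G"
    using Suc t G subgroup.m_closed by fastforce
  have "(1 mod n, t) \<otimes>\<^bsub>U n\<^esub> (1 mod n, (k * t) mod n) = (1 mod n, (Suc k * t) mod n)"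
  proof -
    have "(1 mod n * (k * t mod n) + t) mod n = (k * t + t) mod n"
      by (metis mod_add_left_eq mod_mod_trivial mod_mult_left_eq mult_1)
    then show ?thesis by (simp add: U_mult mod_simps add.commute)
  qed
  then show ?case using m n by simp
qed

lemma trans_d:
  assumes n: "0 < n" and G: "subgroup G (U n)"
  shows "\<exists>d. 0 < d \<and> d dvd n \<and> (\<forall>t<n. (1 mod n, t) \<in> G \<longleftrightarrow> d dvd t)"
proof -
  define H where "H = {t. t < n \<and> (1 mod n, t) \<in> G}"
  have H0: "0 \<in> H" using trans_mult[OF n G, of 0 0] n G subgroup.one_closed
    by (fastforce simp: U_one H_def)
  have Hmult: "(k * t) mod n \<in> H" if "t \<in> H" for k t
    using trans_mult[OF n G, of t k] that by (simp add: H_def)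
  show ?thesis
  proof (cases "\<exists>t\<in>H. t > 0")
    case False
    then have "H = {0}" using H0 by auto
    have "\<forall>t<n. (1 mod n, t) \<in> G \<longleftrightarrow> n dvd t"
    proof (intro allI impI)
      fix t assume t: "t < n"
      have "(1 mod n, t) \<in> G \<longleftrightarrow> t \<in> H" using t by (simp add: H_def)
      also have "\<dots> \<longleftrightarrow> t = 0" using \<open>H = {0}\<close> by blast
      also have "\<dots> \<longleftrightarrow> n dvd t" using t by (metis dvd_0_right dvd_imp_le leD neq0_conv)
      finally show "(1 mod n, t) \<in> G \<longleftrightarrow> n dvd t" .
    qed
    then show ?thesis using n by (intro exI[of _ n] conjI) simp_all
  next
    case True
    define d where "d = Min {t\<in>H. t > 0}"
    have finH: "finite {t\<in>H. t > 0}" by (rule finite_subset[of _ "{..<n}"]) (auto simp: H_def)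
    have dH: "d \<in> H" "d > 0" using Min_in[OF finH] True by (auto simp: d_def)
    have dn: "d < n" using dH by (simp add: H_def)
    have dmin: "d \<le> r" if "r \<in> H" "r > 0" for r using Min_le[OF finH] that by (auto simp: d_def)
    have modH: "(t + (t div d) * (n - 1) * d) mod n = t mod d" for t
    proof -
      have "t + (t div d) * (n - 1) * d = t mod d + (t div d) * d * n"
      proof -
        have "(t div d) * d * n = (t div d) * d + (t div d) * (n - 1) * d" using n
          by (metis (no_types, lifting) Suc_diff_1 add.commute mult.commute mult_Suc_right distrib_left mult.assoc)
        then show ?thesis by (metis add.assoc div_mult_mod_eq add.commute)
      qed
      then have "(t + (t div d) * (n - 1) * d) mod n = (t mod d) mod n" by simp
      also have "\<dots> = t mod d" 
      proof -
        have "t mod d < d" using dH(2) by simp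
        then show ?thesis using dn by simp
      qed
      finally show ?thesis .
    qed
    have divides: "d dvd t" if "t \<in> H \<or> t = n" for t
    proof -
      have u: "((t div d) * (n - 1) * d) mod n \<in> H" using Hmult[OF dH(1), of "(t div d) * (n - 1)"] by simp
      have "t mod d \<in> H"
      proof (cases "t = n")
        case True
        have "((t div d) * (n - 1) * d) mod n = ((t div d) * (n - 1) * d + n) mod n" by simp
        also have "\<dots> = t mod d" using modH[of t] True by (simp add: add.commute)
        finally show ?thesis using u by simp
      next
        case False
        then have tH: "t \<in> H" using that by simp
        have tn: "t < n" using tH by (simp add: H_def)
        have "(1 mod n, t) \<otimes>\<^bsub>U n\<^esub> (1 mod n, ((t div d) * (n - 1) * d) mod n) \<in> G"
        proof -
          have a: "(1 mod n, t) \<in> G" using tH by (simp add: H_def)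
          have b: "(1 mod n, ((t div d) * (n - 1) * d) mod n) \<in> G" using u by (simp add: H_def)
          show ?thesis using subgroup.m_closed[OF G a b] .
        qed
        moreover have "(1 mod n, t) \<otimes>\<^bsub>U n\<^esub> (1 mod n, ((t div d) * (n - 1) * d) mod n)
           = (1 mod n, t mod d)"
        proof -
          have e1: "(1 mod n * ((t div d) * (n - 1) * d mod n)) mod n = ((t div d) * (n - 1) * d) mod n"
            by (metis mod_mult_left_eq mult_1 mod_mod_trivial)
          have "(1 mod n * ((t div d) * (n - 1) * d mod n) + t) mod n = ((t div d) * (n - 1) * d + t) mod n"
            by (rule mod_add_cong) (use e1 in simp_all)
          then have "(1 mod n * ((t div d) * (n - 1) * d mod n) + t) mod n = (t + (t div d) * (n - 1) * d) mod n"
            by (simp add: add.commute)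
          then show ?thesis using modH[of t] by (simp add: U_mult mod_simps)
        qed
        ultimately show ?thesis using dn dH(2) unfolding H_def
          by (metis (no_types, lifting) mem_Collect_eq mod_less_divisor order.strict_trans)
      qed
      then have "t mod d = 0" using dmin[of "t mod d"] dH(2) by (meson mod_less_divisor not_gr0 not_less)
      then show ?thesis by (simp add: mod_eq_0_iff_dvd)
    qed
    have "\<forall>t<n. (1 mod n, t) \<in> G \<longleftrightarrow> d dvd t"
    proof (intro allI impI iffI)
      fix t assume "t < n" "(1 mod n, t) \<in> G"
      then show "d dvd t" using divides H_def by blast
    next
      fix t assume t: "t < n" "d dvd t"
      then obtain k where "t = d * k" by (auto elim: dvdE)
      then have "t = k * d" by simp
      then have "(k * d) mod n = t" using t by simp
      then show "(1 mod n, t) \<in> G" using Hmult[OF dH(1), of k] by (simp add: H_def)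
    qed
    then show ?thesis using dH(2) divides[of n] by blast
  qed
qed



definition red :: "nat \<Rightarrow> nat \<times> nat \<Rightarrow> nat \<times> nat" where
  "red d g = (fst g mod d, snd g mod d)"

lemma red_hom:
  assumes d: "0 < d" and dn: "d dvd n"
  shows "red d \<in> hom (U n) (U d)"
proof (rule homI)
  fix g assume "g \<in> carrier (U n)"
  then have "coprime (fst g) n" by (auto simp: U_carrier)
  then have "coprime (fst g) d" using dn coprime_imp_coprime dvd_trans by blast
  then have "coprime (fst g mod d) d" using d by (simp add: coprime_mod_left_iff)
  then show "red d g \<in> carrier (U d)" using d by (simp add: U_carrier red_def)
next
  fix g h
  show "red d (g \<otimes>\<^bsub>U n\<^esub> h) = red d g \<otimes>\<^bsub>U d\<^esub> red d h"
  proof -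
    have "(fst g * snd h + snd g) mod d = (fst g mod d * (snd h mod d) + snd g) mod d"
      by (rule mod_add_cong) (simp_all add: mod_mult_eq)
    then show ?thesis using dn by (simp add: red_def U_mult mod_mod_cancel mod_simps)
  qed
qed

lemma red_act:
  assumes dn: "d dvd n"
  shows "act d (red d g) (v mod d) = act n g v mod d"
proof -
  have "(fst g mod d * (v mod d) + snd g mod d) mod d = (fst g * v + snd g) mod d"
    by (rule mod_add_cong) (simp_all add: mod_mult_eq)
  then show ?thesis using dn by (simp add: act_def red_def mod_mod_cancel)
qed

lemma card_lift:
  assumes d: "0 < d" and dn: "d dvd n" and Ob: "Ob \<subseteq> {..<d}"
  shows "card {x. x < n \<and> x mod d \<in> Ob} = (n div d) * card Ob"
proof -
  have fO: "finite Ob" using Ob finite_subset by blast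
  have inj: "inj_on (\<lambda>(q, r). q * d + r) ({..<n div d} \<times> Ob)"
  proof (rule inj_onI, clarsimp)
    fix q r q' r' assume r: "r \<in> Ob" "r' \<in> Ob" and e: "q * d + r = q' * d + r'"
    have "r < d" "r' < d" using r Ob by auto
    then have "(q * d + r) div d = q" "(q' * d + r') div d = q'"
      "(q * d + r) mod d = r" "(q' * d + r') mod d = r'" using d by simp_all
    then show "q = q' \<and> r = r'" using e by metis
  qed
  have img: "(\<lambda>(q, r). q * d + r) ` ({..<n div d} \<times> Ob) = {x. x < n \<and> x mod d \<in> Ob}"
  proof (rule equalityI; rule subsetI)
    fix x assume "x \<in> (\<lambda>(q, r). q * d + r) ` ({..<n div d} \<times> Ob)"
    then obtain q r where qr: "q < n div d" "r \<in> Ob" "x = q * d + r" by auto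
    have "r < d" using qr Ob by auto
    then have "x mod d = r" using qr by simp
    moreover have "x < n"
    proof -
      have "Suc q \<le> n div d" using qr by simp
      then have "Suc q * d \<le> n div d * d" by (rule mult_le_mono1)
      then have "Suc q * d \<le> n" using dn by simp
      then show ?thesis using qr \<open>r < d\<close> by simp
    qed
    ultimately show "x \<in> {x. x < n \<and> x mod d \<in> Ob}" using qr by simp
  next
    fix x assume x: "x \<in> {x. x < n \<and> x mod d \<in> Ob}"
    have "x div d < n div d"
    proof -
      obtain m where m: "n = d * m" using dn by blast
      have "x < d * m" using x m by simp
      then have "x div d < m" using d by (simp add: less_mult_imp_div_less mult.commute)
      then show ?thesis using m d by simp
    qed
    moreover have "x = (x div d) * d + x mod d" by simp
    ultimately show "x \<in> (\<lambda>(q, r). q * d + r) ` ({..<n div d} \<times> Ob)"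
      using x by (intro image_eqI[of _ _ "(x div d, x mod d)"]) auto
  qed
  have "card {x. x < n \<and> x mod d \<in> Ob} = card ({..<n div d} \<times> Ob)"
    using card_image[OF inj] img by simp
  then show ?thesis by (simp add: card_cartesian_product)
qed



theorem proposition2p2:
  fixes n :: nat and G :: "(nat \<times> nat) set" and v :: nat
  assumes "0 < n"
    and "subgroup G (U n)"
    and "v \<in> S n"
  shows "lam n G dvd card (Orb n G v)"
proof -
  note n = assms(1) and G = assms(2)
  have vn: "v < n" using assms(3) by (simp add: S_def)
  interpret Un: group "U n" using U_group[OF n] .
  obtain d where d: "0 < d" "d dvd n" and dT: "\<And>t. t < n \<Longrightarrow> (1 mod n, t) \<in> G \<longleftrightarrow> d dvd t"
    using trans_d[OF n G] by blast
  interpret Ud: group "U d" using U_group[OF d(1)] .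
  have hom: "group_hom (U n) (U d) (red d)"
    using red_hom[OF d] Un.is_group Ud.is_group by (simp add: group_hom_def group_hom_axioms_def)
  define F where "F = red d ` G"
  have F: "subgroup F (U d)" unfolding F_def using group_hom.subgroup_img_is_subgroup[OF hom G] .
  have GU: "G \<subseteq> carrier (U n)" using G subgroup.subset by blast
  have redc: "red d (g \<otimes>\<^bsub>U n\<^esub> h) = red d g \<otimes>\<^bsub>U d\<^esub> red d h" if "g \<in> G" "h \<in> G" for g h
    using that GU by (intro group_hom.hom_mult[OF hom]) auto
  have commG: "red d (g \<otimes>\<^bsub>U n\<^esub> h) = red d (h \<otimes>\<^bsub>U n\<^esub> g)" if g: "g \<in> G" and h: "h \<in> G" for g h
  proof -
    have gh: "g \<otimes>\<^bsub>U n\<^esub> h \<in> G" "h \<otimes>\<^bsub>U n\<^esub> g \<in> G"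
      using subgroup.m_closed[OF G g h] subgroup.m_closed[OF G h g] by auto
    define k where "k = (g \<otimes>\<^bsub>U n\<^esub> h) \<otimes>\<^bsub>U n\<^esub> inv\<^bsub>U n\<^esub> (h \<otimes>\<^bsub>U n\<^esub> g)"
    have kG: "k \<in> G" unfolding k_def
      using subgroup.m_closed[OF G gh(1) subgroup.m_inv_closed[OF G gh(2)]] .
    have kc: "k \<in> carrier (U n)" using kG GU by blast
    have keq: "k \<otimes>\<^bsub>U n\<^esub> (h \<otimes>\<^bsub>U n\<^esub> g) = g \<otimes>\<^bsub>U n\<^esub> h"
    proof -
      have c1: "g \<otimes>\<^bsub>U n\<^esub> h \<in> carrier (U n)" "h \<otimes>\<^bsub>U n\<^esub> g \<in> carrier (U n)" using gh GU by auto
      show ?thesis unfolding k_def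
        by (simp add: Un.m_assoc[OF c1(1) Un.inv_closed[OF c1(2)] c1(2)] Un.l_inv[OF c1(2)] Un.r_one[OF c1(1)])
    qed
    have hgc: "h \<otimes>\<^bsub>U n\<^esub> g \<in> carrier (U n)" using gh GU by blast
    define c where "c = fst (h \<otimes>\<^bsub>U n\<^esub> g)"
    have cop: "coprime c n" using hgc by (auto simp: c_def U_carrier)
    have fgh: "fst (g \<otimes>\<^bsub>U n\<^esub> h) = c" by (simp add: c_def U_mult mult.commute)
    have "(fst k * c) mod n = c" using keq fgh by (metis U_mult c_def fst_conv)
    then have "[fst k * c = 1 * c] (mod n)" using hgc by (auto simp: cong_def c_def U_carrier)
    then have "[fst k = 1] (mod n)" using cong_mult_rcancel_nat[OF cop, of "fst k" 1] by blast
    then have fk: "fst k = 1 mod n" using kc by (auto simp: cong_def U_carrier)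
    have "snd k < n" using kc by (auto simp: U_carrier)
    then have "d dvd snd k" using dT[of "snd k"] kG fk by (metis prod.collapse)
    moreover have "(1 mod n) mod d = 1 mod d" using d(2) by (rule mod_mod_cancel)
    ultimately have rk: "red d k = \<one>\<^bsub>U d\<^esub>" using fk unfolding red_def U_one
      by (simp del: mod_mod_cancel)
    have "red d (g \<otimes>\<^bsub>U n\<^esub> h) = red d k \<otimes>\<^bsub>U d\<^esub> red d (h \<otimes>\<^bsub>U n\<^esub> g)"
      using redc[OF kG gh(2)] keq by simp
    also have "\<dots> = red d (h \<otimes>\<^bsub>U n\<^esub> g)"
      using rk hgc hom group_hom.hom_closed by (metis Ud.l_one)
    finally show ?thesis .
  qed
  have comm: "a \<otimes>\<^bsub>U d\<^esub> b = b \<otimes>\<^bsub>U d\<^esub> a" if "a \<in> F" "b \<in> F" for a b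
    using that commG redc unfolding F_def by auto
  obtain w where w: "w < d" "\<And>u. u < d \<Longrightarrow> card (Stab d F u) dvd card (Stab d F w)"
    using core[OF d(1) F comm] by blast
  have finF: "finite F" using F subgroup.subset finite_U finite_subset by blast
  have Fpos: "card F > 0"
  proof -
    have "\<one>\<^bsub>U d\<^esub> \<in> F" using F subgroup.one_closed by blast
    then show ?thesis using finF card_gt_0_iff by blast
  qed
  have Ow: "card (Orb d F w) dvd card (Orb d F u)" if u: "u < d" for u
  proof -
    obtain k where k: "card (Stab d F w) = card (Stab d F u) * k" using w(2)[OF u] by blast
    have "card (Orb d F u) * card (Stab d F u) = card (Orb d F w) * card (Stab d F u) * k"
      using orbit_stab[OF d(1) F u] orbit_stab[OF d(1) F w(1)] k by (simp add: mult.assoc)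
    moreover have "card (Stab d F u) > 0"
      using orbit_stab[OF d(1) F u] Fpos by (metis gr0I mult_0_right)
    ultimately have "card (Orb d F u) = card (Orb d F w) * k" by (simp add: mult.commute mult.left_commute)
    then show ?thesis by simp
  qed
  have Opos: "card (Orb d F u) > 0" if "u < d" for u
    using orbit_stab[OF d(1) F that] Fpos by (metis gr0I mult_zero_left)
  have Orb_eq: "Orb n G x = {y. y < n \<and> y mod d \<in> Orb d F (x mod d)}" if x: "x < n" for x
  proof (rule equalityI; rule subsetI)
    fix y assume "y \<in> Orb n G x"
    then obtain g where g: "g \<in> G" "y = act n g x" by (auto simp: Orb_def)
    have "y mod d = act d (red d g) (x mod d)" using red_act[OF d(2)] g by simp
    then show "y \<in> {y. y < n \<and> y mod d \<in> Orb d F (x mod d)}"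
      using g n by (auto simp: Orb_def F_def act_def)
  next
    fix y assume y: "y \<in> {y. y < n \<and> y mod d \<in> Orb d F (x mod d)}"
    then obtain g where g: "g \<in> G" "y mod d = act d (red d g) (x mod d)"
      by (auto simp: Orb_def F_def)
    define z where "z = act n g x"
    have zn: "z < n" using n by (simp add: z_def act_def)
    have yz: "y mod d = z mod d" using g red_act[OF d(2)] by (simp add: z_def)
    define t where "t = nat ((int y - int z) mod int n)"
    have it: "int t = (int y - int z) mod int n" using n by (simp add: t_def)
    have tn: "t < n" using n by (simp add: t_def nat_less_iff)
    have "int d dvd int t"
    proof -
      have "int y mod int d = int z mod int d" using yz by (metis of_nat_mod)
      then have "int d dvd int y - int z" by (simp add: mod_eq_dvd_iff)
      moreover have "int d dvd int n" using d(2) by simp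
      ultimately show ?thesis unfolding it by (simp add: dvd_mod)
    qed
    then have "d dvd t" by presburger
    then have t1: "(1 mod n, t) \<in> G" using dT[OF tn] by blast
    have kg: "(1 mod n, t) \<otimes>\<^bsub>U n\<^esub> g \<in> G" using subgroup.m_closed[OF G t1 g(1)] .
    have "act n ((1 mod n, t) \<otimes>\<^bsub>U n\<^esub> g) x = act n (1 mod n, t) z"
      by (simp add: act_mult z_def)
    also have "\<dots> = y"
    proof -
      have "int (act n (1 mod n, t) z) = (int (1 mod n) * int z + int t) mod int n"
        by (simp add: int_act)
      also have "\<dots> = (int z + int t) mod int n"
        by (rule mod_add_cong) (simp_all add: zmod_int mod_mult_left_eq[of "int 1" "int n", simplified])
      also have "\<dots> = (int z + (int y - int z)) mod int n" unfolding it by (simp add: mod_add_right_eq)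
      also have "\<dots> = int y" using y by simp
      finally show ?thesis by simp
    qed
    finally show "y \<in> Orb n G x" using kg by (auto simp: Orb_def intro!: image_eqI[of _ _ "(1 mod n, t) \<otimes>\<^bsub>U n\<^esub> g"])
  qed
  have Ocard: "card (Orb n G x) = (n div d) * card (Orb d F (x mod d))" if x: "x < n" for x
  proof -
    have "Orb d F (x mod d) \<subseteq> {..<d}" using d(1) by (auto simp: Orb_def act_def)
    then show ?thesis using Orb_eq[OF x] card_lift[OF d] by simp
  qed
  have nd: "n div d > 0" using d n by (simp add: dvd_imp_le div_greater_zero_iff)
  have dn: "d \<le> n" using d n dvd_imp_le by blast
  have fin: "finite ((\<lambda>v. card (Orb n G v)) ` S n)" by (simp add: S_def)
  have ne: "(\<lambda>v. card (Orb n G v)) ` S n \<noteq> {}" using n by (auto simp: S_def)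
  obtain v0 where v0: "v0 < n" "lam n G = card (Orb n G v0)"
    using Min_in[OF fin ne] unfolding lam_def by (auto simp: S_def)
  have "lam n G \<le> card (Orb n G w)"
    unfolding lam_def using Min_le[OF fin] w(1) dn by (simp add: S_def)
  then have "(n div d) * card (Orb d F (v0 mod d)) \<le> (n div d) * card (Orb d F w)"
    using v0 Ocard[OF v0(1)] Ocard[of w] w(1) dn by simp
  then have le: "card (Orb d F (v0 mod d)) \<le> card (Orb d F w)" using nd by simp
  have v0d: "v0 mod d < d" using d by simp
  have "card (Orb d F w) \<le> card (Orb d F (v0 mod d))"
    using Ow[OF v0d] Opos[OF v0d] by (simp add: dvd_imp_le)
  then have eq: "card (Orb d F (v0 mod d)) = card (Orb d F w)" using le by simp
  have "lam n G = (n div d) * card (Orb d F w)" using v0 Ocard[OF v0(1)] eq by simp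
  moreover have "card (Orb n G v) = (n div d) * card (Orb d F (v mod d))" using Ocard[OF vn] .
  moreover have "card (Orb d F w) dvd card (Orb d F (v mod d))" using Ow d by simp
  ultimately show ?thesis by simp
qed


end
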